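(* Let $\lambda\ge 0$ be an integer. For one-sided matching with unrestricted (arbitrary nonnegative) valuations, the algorithm $\lambda$-TSF makes at most $1+\lambda+\lambda\log n$ value queries per agent and has distortion at most $2n^{1/(\lambda+1)}$.
   Context: One-sided matching: there is a set $N$ of $n$ agents and a set $A$ of $n$ items. Each agent $i$ has a valuation function $v_i:A\to\mathbb{R}_{\ge 0}$. A profile $\mathbf v$ induces an ordinal profile $\succ_{\mathbf v}$ of strict rankings consistent with the values (if $a\succ_i b$ then $v_i(a)\ge v_i(b)$). A matching $Y=(y_i)$ is a bijection $N\to A$, and $\mathrm{SW}(Y\mid\mathbf v)=\sum_i v_i(y_i)$. An algorithm receives $\succ_{\mathbf v}$ and may make value queries $(i,j)\mapsto v_i(j)$. Its distortion is $\sup_{\mathbf v}\max_Z\mathrm{SW}(Z\mid\mathbf v)/\mathrm{SW}(\text{output}\mid\mathbf v)$. Algorithm $\lambda$-TSF: let $\alpha_\ell=n^{-\ell/(\lambda+1)}$ for $\ell=0,\dots,\lambda$. For each agent $i$: - query $i$'s top-ranked item $j_i^*$ and let $v_i^*=v_i(j_i^* )$; - set $Q_{i,0}=\{j_i^*\}$ and $\tilde v_i(j_i^* )=v_i^*$; - for each $\ell=1,\dots,\lambda$, let $Q_{i,\ell}$ be the set of items $j\ne j_i^*$ with $v_i(j)\in[\alpha_\ell v_i^*,\alpha_{\ell-1}v_i^* )$ (for $\ell=1$ the upper endpoint $v_i^*$ is included). Since values are nonincreasing along $\succ_i$, each $Q_{i,\ell}$ is a contiguous segment of $i$'s ranking,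 and it is found by binary search over the ranking using value queries. Set $\tilde v_i(j)=\alpha_\ell v_i^*$ for $j\in Q_{i,\ell}$; - set $\tilde v_i(j)=0$ for items $j$ in no $Q_{i,\ell}$. The algorithm outputs a matching maximizing $\sum_i\tilde v_i(y_i)$. *)

theory Defs
  imports Complex_Main
begin

text \<open>Agents and items are both identified with {..<n}.  A valuation profile is
  v :: nat => nat => real (v i j = value of agent i for item j).  The ordinal profile
  is pref :: nat => nat => nat, where pref i k is the item agent i ranks at position k
  (position 0 = top).  A value oracle for agent i is accessed through positions:
  querying position k returns v i (pref i k).\<close>

definition is_matching :: "nat \<Rightarrow> (nat \<Rightarrow> nat) \<Rightarrow> bool" where
  "is_matching n y \<longleftrightarrow> bij_betw y {..<n} {..<n}"

definition SW :: "nat \<Rightarrow> (nat \<Rightarrow> nat \<Rightarrow> real) \<Rightarrow> (nat \<Rightarrow> nat) \<Rightarrow> real" where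
  "SW n v y = (\<Sum>i<n. v i (y i))"

text \<open>Returns the first position in [lo,hi] whose value is below threshold t (assuming
  values are nonincreasing), together with the list of queried positions.\<close>

function bsearch :: "(nat \<Rightarrow> real) \<Rightarrow> real \<Rightarrow> nat \<Rightarrow> nat \<Rightarrow> nat \<times> nat list" where
  "bsearch q t lo hi =
     (if hi \<le> lo then (lo, [])
      else (let mid = (lo + hi) div 2 in
            if t \<le> q mid
            then (let r = bsearch q t (Suc mid) hi in (fst r, mid # snd r))
            else (let r = bsearch q t lo mid in (fst r, mid # snd r))))"
  by pat_completeness auto
termination by (relation "measure (\<lambda>(q, t, lo, hi). hi - lo)") auto

definition tsf_alpha :: "nat \<Rightarrow> nat \<Rightarrow> nat \<Rightarrow> real" where
  "tsf_alpha n lam l = real n powr (- (real l / real (Suc lam)))"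

text \<open>The query of
  position 0 gives v*; for each l = 1..lambda a binary search over positions 1..<n
  finds the boundary b_l (first position with value < alpha_l v*), so that
  Q_l = positions in [b_(l-1), b_l) with b_0 = 1.\<close>

definition tsf_agent :: "nat \<Rightarrow> nat \<Rightarrow> (nat \<Rightarrow> real) \<Rightarrow> (nat \<Rightarrow> real) \<times> nat list" where
  "tsf_agent n lam q =
     (let vs = q 0;
          res = map (\<lambda>l. bsearch q (tsf_alpha n lam l * vs) 1 n) [1..<Suc lam];
          bnd = map fst res;
          est = (\<lambda>k. if k = 0 then vs
                     else (case find (\<lambda>l. k < bnd ! (l - 1)) [1..<Suc lam] of
                             None \<Rightarrow> 0
                           | Some l \<Rightarrow> tsf_alpha n lam l * vs))
      in (est, 0 # concat (map snd res)))"

definition tsf_queries :: "nat \<Rightarrow> nat \<Rightarrow> (nat \<Rightarrow> nat \<Rightarrow> real) \<Rightarrow> (nat \<Rightarrow> nat \<Rightarrow> nat) \<Rightarrow> nat \<Rightarrow> nat" where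
  "tsf_queries n lam v pref i = length (snd (tsf_agent n lam (\<lambda>k. v i (pref i k))))"

definition tsf_est :: "nat \<Rightarrow> nat \<Rightarrow> (nat \<Rightarrow> nat \<Rightarrow> real) \<Rightarrow> (nat \<Rightarrow> nat \<Rightarrow> nat) \<Rightarrow> nat \<Rightarrow> nat \<Rightarrow> real" where
  "tsf_est n lam v pref i j =
     fst (tsf_agent n lam (\<lambda>k. v i (pref i k))) (inv_into {..<n} (pref i) j)"

text \<open>Y is a possible output of lambda-TSF: a matching maximizing the estimated welfare
  (any tie-breaking).\<close>
definition tsf_output :: "nat \<Rightarrow> nat \<Rightarrow> (nat \<Rightarrow> nat \<Rightarrow> real) \<Rightarrow> (nat \<Rightarrow> nat \<Rightarrow> nat) \<Rightarrow> (nat \<Rightarrow> nat) \<Rightarrow> bool" where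
  "tsf_output n lam v pref Y \<longleftrightarrow> is_matching n Y \<and>
     (\<forall>Z. is_matching n Z \<longrightarrow> SW n (tsf_est n lam v pref) Z \<le> SW n (tsf_est n lam v pref) Y)"

end

theory Submission imports Defs begin
declare bsearch.simps[simp del]

lemma bsearch_props:
  assumes "lo \<le> hi" and "\<And>a b. lo \<le> a \<Longrightarrow> a \<le> b \<Longrightarrow> b < hi \<Longrightarrow> q b \<le> q a"
  shows "lo \<le> fst (bsearch q t lo hi) \<and> fst (bsearch q t lo hi) \<le> hi
    \<and> (\<forall>k. lo \<le> k \<longrightarrow> k < fst (bsearch q t lo hi) \<longrightarrow> t \<le> q k)
    \<and> (\<forall>k. fst (bsearch q t lo hi) \<le> k \<longrightarrow> k < hi \<longrightarrow> q k < t)"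
  using assms
proof (induction q t lo hi rule: bsearch.induct)
  case (1 q t lo hi)
  show ?case
  proof (cases "hi \<le> lo")
    case True
    then have "bsearch q t lo hi = (lo, [])" by (subst bsearch.simps) simp
    with True "1.prems" show ?thesis by auto
  next
    case False
    define mid where "mid = (lo+hi) div 2"
    have m: "lo \<le> mid" "mid < hi" using False by (auto simp: mid_def)
    show ?thesis
    proof (cases "t \<le> q mid")
      case True
      have eq: "fst (bsearch q t lo hi) = fst (bsearch q t (Suc mid) hi)"
        by (subst bsearch.simps) (simp add: False True mid_def[symmetric] Let_def)
      have IH: "Suc mid \<le> fst (bsearch q t (Suc mid) hi) \<and> fst (bsearch q t (Suc mid) hi) \<le> hi
    \<and> (\<forall>k. Suc mid \<le> k \<longrightarrow> k < fst (bsearch q t (Suc mid) hi) \<longrightarrow> t \<le> q k)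
    \<and> (\<forall>k. fst (bsearch q t (Suc mid) hi) \<le> k \<longrightarrow> k < hi \<longrightarrow> q k < t)"
        using "1.IH"(1)[OF False mid_def True] m "1.prems"(2) by simp
      have "\<forall>k. lo \<le> k \<longrightarrow> k \<le> mid \<longrightarrow> t \<le> q k"
        using True "1.prems"(2) m by (meson order_trans)
      with IH m show ?thesis unfolding eq by (metis le_trans not_less_eq_eq Suc_leD)
    next
      case True': False
      have eq: "fst (bsearch q t lo hi) = fst (bsearch q t lo mid)"
        by (subst bsearch.simps) (simp add: False True' mid_def[symmetric] Let_def)
      have IH: "lo \<le> fst (bsearch q t lo mid) \<and> fst (bsearch q t lo mid) \<le> mid
    \<and> (\<forall>k. lo \<le> k \<longrightarrow> k < fst (bsearch q t lo mid) \<longrightarrow> t \<le> q k)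
    \<and> (\<forall>k. fst (bsearch q t lo mid) \<le> k \<longrightarrow> k < mid \<longrightarrow> q k < t)"
        using "1.IH"(2)[OF False mid_def True'] m "1.prems"(2) by simp
      have "\<forall>k. mid \<le> k \<longrightarrow> k < hi \<longrightarrow> q k < t"
        using True' "1.prems"(2) m by (meson not_le order_trans le_less_trans)
      with IH m show ?thesis unfolding eq by (metis le_trans not_le less_imp_le)
    qed
  qed
qed

lemma bsearch_len:
  "(hi \<le> lo \<longrightarrow> length (snd (bsearch q t lo hi)) = 0) \<and>
   (lo < hi \<longrightarrow> 2 ^ length (snd (bsearch q t lo hi)) \<le> 2 * (hi - lo))"
proof (induction q t lo hi rule: bsearch.induct)
  case (1 q t lo hi)
  show ?case
  proof (cases "hi \<le> lo")
    case True
    then have "bsearch q t lo hi = (lo, [])" by (subst bsearch.simps) simp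
    with True show ?thesis by auto
  next
    case False
    define mid where "mid = (lo+hi) div 2"
    show ?thesis
    proof (cases "t \<le> q mid")
      case True
      have eq: "length (snd (bsearch q t lo hi)) = Suc (length (snd (bsearch q t (Suc mid) hi)))"
        by (subst bsearch.simps) (simp add: False True mid_def[symmetric] Let_def)
      note IH = "1.IH"(1)[OF False mid_def True]
      have s: "2 * (hi - Suc mid) \<le> hi - lo" using False by (simp add: mid_def)
      show ?thesis
      proof (cases "hi \<le> Suc mid")
        case True
        then show ?thesis using IH False by (simp add: eq)
      next
        case False
        then have "2 ^ length (snd (bsearch q t (Suc mid) hi)) \<le> 2 * (hi - Suc mid)" using IH by simp
        then show ?thesis using s False `\<not> hi \<le> lo` by (simp add: eq)
      qed
    next
      case True': False
      have eq: "length (snd (bsearch q t lo hi)) = Suc (length (snd (bsearch q t lo mid)))"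
        by (subst bsearch.simps) (simp add: False True' mid_def[symmetric] Let_def)
      note IH = "1.IH"(2)[OF False mid_def True']
      have s: "2 * (mid - lo) \<le> hi - lo" using False by (simp add: mid_def)
      show ?thesis
      proof (cases "mid \<le> lo")
        case True
        then show ?thesis using IH False by (simp add: eq)
      next
        case False
        then have "2 ^ length (snd (bsearch q t lo mid)) \<le> 2 * (mid - lo)" using IH by simp
        then show ?thesis using s False `\<not> hi \<le> lo` by (simp add: eq)
      qed
    qed
  qed
qed

lemma alpha_pos: "0 < n \<Longrightarrow> 0 < tsf_alpha n lam l"
  by (simp add: tsf_alpha_def)

lemma alpha_0: "0 < n \<Longrightarrow> tsf_alpha n lam 0 = 1"
  by (simp add: tsf_alpha_def)

lemma alpha_step: assumes "0 < n" "1 \<le> l"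
  shows "real n powr (1 / real (Suc lam)) * tsf_alpha n lam l = tsf_alpha n lam (l - 1)"
proof -
  have "real n powr (1 / real (Suc lam)) * tsf_alpha n lam l
     = real n powr (1 / real (Suc lam) + - (real l / real (Suc lam)))"
    by (simp add: tsf_alpha_def powr_add[symmetric])
  also have "1 / real (Suc lam) + - (real l / real (Suc lam)) = - (real (l - 1) / real (Suc lam))"
    using assms(2) by (simp add: of_nat_diff field_simps)
  finally show ?thesis by (simp add: tsf_alpha_def)
qed

lemma alpha_last: assumes "0 < n"
  shows "tsf_alpha n lam lam * real n = real n powr (1 / real (Suc lam))"
proof -
  have "tsf_alpha n lam lam * real n = tsf_alpha n lam lam * real n powr 1" using assms by simp
  also have "\<dots> = real n powr (- (real lam / real (Suc lam)) + 1)"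
    unfolding tsf_alpha_def by (rule powr_add[symmetric])
  also have "- (real lam / real (Suc lam)) + 1 = 1 / real (Suc lam)"
    by (simp add: field_simps)
  finally show ?thesis .
qed

lemma agent_est:
  fixes q :: "nat \<Rightarrow> real"
  assumes n: "0 < n" and nonneg: "\<And>k. k < n \<Longrightarrow> 0 \<le> q k"
    and mono: "\<And>a b. a \<le> b \<Longrightarrow> b < n \<Longrightarrow> q b \<le> q a" and k: "k < n"
  shows "0 \<le> fst (tsf_agent n lam q) k \<and> fst (tsf_agent n lam q) k \<le> q k \<and>
     q k \<le> real n powr (1 / real (Suc lam)) * fst (tsf_agent n lam q) k + tsf_alpha n lam lam * q 0"
proof -
  define c where "c = real n powr (1 / real (Suc lam))"
  define b where "b l = fst (bsearch q (tsf_alpha n lam l * q 0) 1 n)" for l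
  define P where "P = (\<lambda>l. k < map fst (map (\<lambda>l. bsearch q (tsf_alpha n lam l * q 0) 1 n) [1..<Suc lam]) ! (l - 1))"
  have vs: "0 \<le> q 0" using nonneg n by simp
  have c0: "0 \<le> c" by (simp add: c_def)
  have est: "fst (tsf_agent n lam q) k = (if k = 0 then q 0 else
      (case find P [1..<Suc lam] of None \<Rightarrow> 0 | Some l \<Rightarrow> tsf_alpha n lam l * q 0))"
    by (simp add: tsf_agent_def Let_def P_def)
  have Pb: "P (Suc i) = (k < b (Suc i))" if "i < lam" for i
    using that by (simp add: P_def b_def del: upt_Suc)
  have bp: "\<And>l. 1 \<le> b l \<and> b l \<le> n \<and> (\<forall>k. 1 \<le> k \<longrightarrow> k < b l \<longrightarrow> tsf_alpha n lam l * q 0 \<le> q k)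
       \<and> (\<forall>k. b l \<le> k \<longrightarrow> k < n \<longrightarrow> q k < tsf_alpha n lam l * q 0)"
    unfolding b_def using n by (intro bsearch_props) (auto intro: mono)
  have ak: "\<And>l. 0 \<le> tsf_alpha n lam l * q 0" using alpha_pos[OF n] vs by (simp add: less_imp_le)
  show ?thesis
  proof (cases "k = 0")
    case True
    have est0: "fst (tsf_agent n lam q) 0 = q 0" by (simp add: tsf_agent_def Let_def)
    have c1: "1 \<le> c" using n by (simp add: c_def ge_one_powr_ge_zero)
    have "q 0 \<le> c * q 0" using mult_right_mono[OF c1 vs] by simp
    then show ?thesis using True vs ak[of lam] est0 by (simp add: c_def)
  next
    case kne: False
    show ?thesis
    proof (cases "find P [1..<Suc lam]")
      case None
      have "q k \<le> tsf_alpha n lam lam * q 0"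
      proof (cases lam)
        case 0
        then show ?thesis using alpha_0[OF n] mono[of 0 k] k by simp
      next
        case (Suc m)
        have "\<not> P (Suc m)" using None Suc by (auto simp: find_None_iff simp del: upt_Suc)
        then have "b lam \<le> k" using Pb[of m] Suc by simp
        then show ?thesis using bp[of lam] k by auto
      qed
      then show ?thesis using kne None nonneg[OF k] by (simp add: est)
    next
      case (Some l)
      then obtain i where i: "i < lam" "P (Suc i)" "l = Suc i" "\<forall>j<i. \<not> P (Suc j)"
        by (auto simp: find_Some_iff simp del: upt_Suc)
      have low: "tsf_alpha n lam l * q 0 \<le> q k"
        using i Pb[of i] bp[of l] kne by auto
      have up: "q k \<le> tsf_alpha n lam i * q 0"
      proof (cases i)
        case 0
        then show ?thesis using alpha_0[OF n] mono[of 0 k] k by simp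
      next
        case (Suc m)
        have "\<not> P (Suc m)" using i Suc by simp
        then have "b i \<le> k" using Pb[of m] Suc i by simp
        then show ?thesis using bp[of i] k by auto
      qed
      have "tsf_alpha n lam i * q 0 = c * (tsf_alpha n lam l * q 0)"
        using alpha_step[OF n, of l lam] i by (simp add: c_def)
      then have "q k \<le> c * (tsf_alpha n lam l * q 0) + tsf_alpha n lam lam * q 0"
        using up ak[of lam] by linarith
      moreover have "fst (tsf_agent n lam q) k = tsf_alpha n lam l * q 0"
        using Some kne by (simp add: est)
      ultimately show ?thesis using low ak[of l] by (simp add: c_def)
    qed
  qed
qed

lemma bs_len_real: assumes "0 < n"
  shows "real (length (snd (bsearch q t 1 n))) \<le> 1 + log 2 (real n)"
proof (cases "n \<le> 1")
  case True
  then have "length (snd (bsearch q t 1 n)) = 0" using bsearch_len[of n 1 q t] by simp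
  then show ?thesis using assms by simp
next
  case False
  let ?L = "length (snd (bsearch q t 1 n))"
  have "2 ^ ?L \<le> 2 * (n - 1)" using bsearch_len[of n 1 q t] False by simp
  then have "2 ^ ?L \<le> 2 * n" by linarith
  then have "real (2 ^ ?L) \<le> real (2 * n)" by (simp only: of_nat_le_iff)
  then have "(2::real) ^ ?L \<le> 2 * real n" by simp
  then have "log 2 (2 ^ ?L) \<le> log 2 (2 * real n)" using assms by (subst log_le_cancel_iff) auto
  then show ?thesis using assms by (simp add: log_mult log_nat_power)
qed

lemma queries_bound: assumes "0 < n"
  shows "real (length (snd (tsf_agent n lam q))) \<le> 1 + real lam + real lam * log 2 (real n)"
proof -
  have "length (snd (tsf_agent n lam q)) = Suc (sum_list (map (\<lambda>l. length (snd (bsearch q (tsf_alpha n lam l * q 0) 1 n))) [1..<Suc lam]))"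
    by (simp add: tsf_agent_def Let_def length_concat comp_def del: upt_Suc)
  also have "sum_list (map (\<lambda>l. length (snd (bsearch q (tsf_alpha n lam l * q 0) 1 n))) [1..<Suc lam])
     = (\<Sum>l\<in>{1..<Suc lam}. length (snd (bsearch q (tsf_alpha n lam l * q 0) 1 n)))"
    by (simp only: sum_set_upt_conv_sum_list_nat[symmetric] set_upt)
  moreover have "real (\<Sum>l\<in>{1..<Suc lam}. length (snd (bsearch q (tsf_alpha n lam l * q 0) 1 n)))
      \<le> (\<Sum>l\<in>{1..<Suc lam}. 1 + log 2 (real n))"
    unfolding of_nat_sum by (rule sum_mono) (rule bs_len_real[OF assms])
  ultimately show ?thesis by (simp add: algebra_simps)
qed

theorem theorem2:
  fixes n lam :: nat and v :: "nat \<Rightarrow> nat \<Rightarrow> real" and pref :: "nat \<Rightarrow> nat \<Rightarrow> nat"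
  assumes "0 < n"
    and "\<And>i j. i < n \<Longrightarrow> j < n \<Longrightarrow> 0 \<le> v i j"
    and "\<And>i. i < n \<Longrightarrow> bij_betw (pref i) {..<n} {..<n}"
    and "\<And>i k k'. i < n \<Longrightarrow> k < k' \<Longrightarrow> k' < n \<Longrightarrow> v i (pref i k') \<le> v i (pref i k)"
  shows "(\<forall>i<n. real (tsf_queries n lam v pref i) \<le> 1 + real lam + real lam * log 2 (real n))
       \<and> (\<forall>Y. tsf_output n lam v pref Y \<longrightarrow>
            (\<forall>Z. is_matching n Z \<longrightarrow>
                 SW n v Z \<le> 2 * real n powr (1 / real (Suc lam)) * SW n v Y))"
proof (intro conjI allI impI)
  fix i assume "i < n"
  show "real (tsf_queries n lam v pref i) \<le> 1 + real lam + real lam * log 2 (real n)"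
    unfolding tsf_queries_def by (rule queries_bound[OF assms(1)])
next
  fix Y Z assume Y: "tsf_output n lam v pref Y" and Z: "is_matching n Z"
  define c where "c = real n powr (1 / real (Suc lam))"
  define a where "a = tsf_alpha n lam lam"
  define E where "E = tsf_est n lam v pref"
  define top where "top i = v i (pref i 0)" for i
  have n: "0 < n" by (rule assms(1))
  have c0: "0 \<le> c" by (simp add: c_def)
  have bounds: "0 \<le> E i j \<and> E i j \<le> v i j \<and> v i j \<le> c * E i j + a * top i"
    if i: "i < n" and j: "j < n" for i j
  proof -
    define k where "k = inv_into {..<n} (pref i) j"
    have bij: "bij_betw (pref i) {..<n} {..<n}" by (rule assms(3)[OF i])
    have kn: "k < n" unfolding k_def using bij j
      by (metis bij_betw_def inv_into_into lessThan_iff)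
    have pk: "pref i k = j" unfolding k_def using bij j
      by (simp add: bij_betw_def f_inv_into_f)
    have Ek: "E i j = fst (tsf_agent n lam (\<lambda>k. v i (pref i k))) k"
      by (simp add: E_def tsf_est_def k_def)
    have "0 \<le> fst (tsf_agent n lam (\<lambda>k. v i (pref i k))) k \<and>
       fst (tsf_agent n lam (\<lambda>k. v i (pref i k))) k \<le> v i (pref i k) \<and>
       v i (pref i k) \<le> c * fst (tsf_agent n lam (\<lambda>k. v i (pref i k))) k + a * v i (pref i 0)"
      unfolding c_def a_def
    proof (rule agent_est[OF n _ _ kn])
      fix k assume "k < n"
      then show "0 \<le> v i (pref i k)"
        using assms(2)[OF i] bij_betw_apply[OF bij] by simp
    next
      fix a b :: nat assume "a \<le> b" "b < n"
      then show "v i (pref i b) \<le> v i (pref i a)"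
        using assms(4)[OF i, of a b] by (cases "a = b") auto
    qed
    then show ?thesis using Ek pk by (simp add: top_def)
  qed
  have topE: "E i (pref i 0) = top i" if i: "i < n" for i
  proof -
    have bij: "bij_betw (pref i) {..<n} {..<n}" by (rule assms(3)[OF i])
    have "inv_into {..<n} (pref i) (pref i 0) = 0"
      using bij n by (simp add: bij_betw_def inv_into_f_f)
    then show ?thesis
      by (simp add: E_def tsf_est_def top_def tsf_agent_def Let_def)
  qed
  have Ymat: "is_matching n Y" and Yopt: "\<And>W. is_matching n W \<Longrightarrow> SW n E W \<le> SW n E Y"
    using Y by (auto simp: tsf_output_def E_def)
  have rng: "\<And>W i. is_matching n W \<Longrightarrow> i < n \<Longrightarrow> W i < n"
    by (auto simp: is_matching_def bij_betw_def)
  have EY: "SW n E Y \<le> SW n v Y"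
    unfolding SW_def by (rule sum_mono) (use bounds rng[OF Ymat] in auto)
  define M where "M = Max (top ` {..<n})"
  have "M \<in> top ` {..<n}" unfolding M_def using n by (intro Max_in) auto
  then obtain i0 where i0: "i0 < n" "top i0 = M" by auto
  have topM: "\<And>i. i < n \<Longrightarrow> top i \<le> top i0" using i0 unfolding M_def by auto
  define t where "t = pref i0 0"
  have tn: "t < n" unfolding t_def using assms(3)[OF i0(1)] n by (auto simp: bij_betw_def)
  define W where "W x = (if x = i0 then t else if x = t then i0 else x)" for x
  have Wmat: "is_matching n W"
    unfolding is_matching_def
    by (rule bij_betw_byWitness[where f' = W]) (auto simp: W_def i0 tn)
  have "top i0 = E i0 (W i0)" using topE[OF i0(1)] by (simp add: W_def t_def)
  also have "\<dots> \<le> SW n E W" unfolding SW_def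
    by (rule member_le_sum) (use i0 bounds rng[OF Wmat] in auto)
  also have "\<dots> \<le> SW n E Y" by (rule Yopt[OF Wmat])
  finally have top0: "top i0 \<le> SW n E Y" .
  have "SW n v Z \<le> (\<Sum>i<n. c * E i (Z i) + a * top i)"
    unfolding SW_def by (rule sum_mono) (use bounds rng[OF Z] in auto)
  also have "\<dots> = c * SW n E Z + a * (\<Sum>i<n. top i)"
    by (simp add: SW_def sum.distrib sum_distrib_left)
  also have "(\<Sum>i<n. top i) \<le> (\<Sum>i<n. top i0)" by (rule sum_mono) (use topM in auto)
  also have "(\<Sum>i<n. top i0) = real n * top i0" by simp
  also have "a * (real n * top i0) = c * top i0"
    using alpha_last[OF n, of lam] by (simp add: a_def c_def)
  finally have "SW n v Z \<le> c * SW n E Z + c * top i0"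
    using alpha_pos[OF n, of lam] by (simp add: a_def mult_left_mono)
  also have "\<dots> \<le> c * SW n E Y + c * SW n E Y"
    using Yopt[OF Z] top0 c0 by (intro add_mono mult_left_mono) auto
  also have "\<dots> \<le> 2 * c * SW n v Y" using mult_left_mono[OF EY c0] by linarith
  finally show "SW n v Z \<le> 2 * real n powr (1 / real (Suc lam)) * SW n v Y" by (simp add: c_def)
qed

end
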